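(* For egalitarian transition structures $\mathcal{T}_1,\mathcal{T}_2$, if $\mathcal{T}_1\equiv\mathcal{T}_2$ (as egalitarian transition structures) then $\mathrm{split}(\mathcal{T}_1)\equiv\mathrm{split}(\mathcal{T}_2)$ (as plain transition structures).
   Context: An atomic egalitarian transition structure is a tuple $(Q,T,\rightarrow,P,g^0)$ where $Q$ (states) and $T$ (transitions) are disjoint sets, ${\rightarrow}\subseteq(Q\times T)\cup(T\times Q)$, $P$ is a set of properties, each a partial function $p:Q\cup T\rightharpoonup C_p$, and $g^0\in Q\cup T$ (elements of $Q\cup T$ are stages). Egalitarian transition structures are defined inductively with their property sets: every atomic one is one, with property set $P$; if $\mathcal{T}_1,\mathcal{T}_2$ are egalitarian with property sets $P_1,P_2$ and $Y\subseteq P_1\times P_2$ with $C_{p_1}=C_{p_2}$ for $(p_1,p_2)\in Y$, then the formal expression $\mathcal{T}_1\|_Y\mathcal{T}_2$ is egalitarian with property set $P_1\uplus P_2$ (distinct structures have disjoint states, transitions, properties). Define $\mathrm{atomic}(\mathcal{T})=\{\mathcal{T}\}$ for atomic $\mathcal{T}$ and $\mathrm{atomic}(\mathcal{T}_1\|_Y\mathcal{T}_2)=\mathrm{atomic}(\mathcal{T}_1)\cup\mathrm{atomic}(\mathcal{T}_2)$; $\mathrm{criteria}(\mathcal{T})=\emptyset$ for atomic $\mathcal{T}$ and $\mathrm{criteria}(\mathcal{T}_1\|_Y\mathcal{T}_2)=\{\{x,y\}\mid\langle x,y\rangle\in Y\}\cup\mathrm{criteria}(\mathcal{T}_1)\cup\mathrm{criteria}(\mathcal{T}_2)$.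 Egalitarian structures are equivalent, $\mathcal{T}_1\equiv\mathcal{T}_2$, iff they have the same atomic components and the same criteria. A plain transition structure is a tuple $(Q,\rightarrow,P,q^0)$ with ${\rightarrow}\subseteq Q\times Q$, properties partial functions $p:Q\rightharpoonup C_p$, $q^0\in Q$. For plain $\mathcal{T}_i=(Q_i,\rightarrow_i,P_i,q_i^0)$ and $Y\subseteq P_1\times P_2$, the plain structure $\mathcal{T}_1\|_Y\mathcal{T}_2$ has states the pairs $\langle q_1,q_2\rangle\in Q_1\times Q_2$ such that for every $(p_1,p_2)\in Y$, $p_1(q_1)$ or $p_2(q_2)$ is undefined or they are equal; $\langle q_1,q_2\rangle\rightarrow\langle q_1',q_2'\rangle$ iff ($q_1\rightarrow_1q_1'$ and $q_2\rightarrow_2q_2'$) or ($q_1\rightarrow_1q_1'$, $q_2=q_2'$) or ($q_1=q_1'$, $q_2\rightarrow_2q_2'$); properties $P_1\uplus P_2$ with $p(\langle q_1,q_2\rangle)=p(q_i)$ for $p\in P_i$; initial state $\langle q_1^0,q_2^0\rangle$ (assumed to be a state). Two plain structures are equivalent, $\mathcal{T}_1\equiv\mathcal{T}_2$, iff there are bijections $f:Q_1\to Q_2$ and $F:P_1\to P_2$ with $q\rightarrow_1q'\Leftrightarrow f(q)\rightarrow_2f(q')$, $C_{p}=C_{F(p)}$, $p(q)=F(p)(f(q))$ for all $q,q'\in Q_1$, $p\in P_1$, and $f(q_1^0)=q_2^0$. Split: for atomic $(Q,T,\rightarrow,P,g^0)$, its split is the plain structure $(Q\cup T,\rightarrow,P,g^0)$;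 $\mathrm{split}(\mathcal{T}_1\|_Y\mathcal{T}_2)=\mathrm{split}(\mathcal{T}_1)\|_Y\mathrm{split}(\mathcal{T}_2)$. *)

theory Defs
  imports Main
begin

(* A property p is the partial function  aval a p : 's => 'v option  with
   codomain  aC a p  (the set C_p). *)
record ('s, 'p, 'v) aets =
  aQ   :: "'s set"
  aT   :: "'s set"
  arel :: "('s \<times> 's) set"
  aP   :: "'p set"
  aval :: "'p \<Rightarrow> 's \<Rightarrow> 'v option"
  aC   :: "'p \<Rightarrow> 'v set"
  ag0  :: 's

definition wf_atomic :: "('s, 'p, 'v) aets \<Rightarrow> bool" where
  "wf_atomic a \<longleftrightarrow>
     aQ a \<inter> aT a = {} \<and>
     arel a \<subseteq> (aQ a \<times> aT a) \<union> (aT a \<times> aQ a) \<and>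
     (\<forall>p \<in> aP a. \<forall>x v. aval a p x = Some v \<longrightarrow> x \<in> aQ a \<union> aT a \<and> v \<in> aC a p) \<and>
     ag0 a \<in> aQ a \<union> aT a"

datatype ('s, 'p, 'v) ets =
    Atom "('s, 'p, 'v) aets"
  | Par "('s, 'p, 'v) ets" "('p \<times> 'p) set" "('s, 'p, 'v) ets"

fun atomic :: "('s, 'p, 'v) ets \<Rightarrow> ('s, 'p, 'v) aets set" where
  "atomic (Atom a) = {a}"
| "atomic (Par T1 Y T2) = atomic T1 \<union> atomic T2"

fun criteria :: "('s, 'p, 'v) ets \<Rightarrow> 'p set set" where
  "criteria (Atom a) = {}"
| "criteria (Par T1 Y T2) = {{x, y} | x y. (x, y) \<in> Y} \<union> criteria T1 \<union> criteria T2"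

fun props :: "('s, 'p, 'v) ets \<Rightarrow> 'p set" where
  "props (Atom a) = aP a"
| "props (Par T1 Y T2) = props T1 \<union> props T2"

fun stages :: "('s, 'p, 'v) ets \<Rightarrow> 's set" where
  "stages (Atom a) = aQ a \<union> aT a"
| "stages (Par T1 Y T2) = stages T1 \<union> stages T2"

fun codom :: "('s, 'p, 'v) ets \<Rightarrow> 'p \<Rightarrow> 'v set" where
  "codom (Atom a) p = aC a p"
| "codom (Par T1 Y T2) p = (if p \<in> props T1 then codom T1 p else codom T2 p)"

(* Well-formedness: the inductive definition of egalitarian transition
   structures, with the standing assumption that distinct components have
   disjoint stages and disjoint property sets (so P1 \<uplus> P2 = P1 \<union> P2). *)
fun wf_ets :: "('s, 'p, 'v) ets \<Rightarrow> bool" where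
  "wf_ets (Atom a) = wf_atomic a"
| "wf_ets (Par T1 Y T2) \<longleftrightarrow>
     wf_ets T1 \<and> wf_ets T2 \<and>
     Y \<subseteq> props T1 \<times> props T2 \<and>
     (\<forall>(p1, p2) \<in> Y. codom T1 p1 = codom T2 p2) \<and>
     stages T1 \<inter> stages T2 = {} \<and>
     props T1 \<inter> props T2 = {}"

definition ets_equiv :: "('s, 'p, 'v) ets \<Rightarrow> ('s, 'p, 'v) ets \<Rightarrow> bool" where
  "ets_equiv T1 T2 \<longleftrightarrow> atomic T1 = atomic T2 \<and> criteria T1 = criteria T2"

(* Plain transition structures; states are trees of stages (nested pairs). *)
datatype 's st = Leaf 's | Node "'s st" "'s st"

record ('s, 'p, 'v) pts =
  pQ   :: "'s st set"
  prel :: "('s st \<times> 's st) set"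
  pP   :: "'p set"
  pval :: "'p \<Rightarrow> 's st \<Rightarrow> 'v option"
  pC   :: "'p \<Rightarrow> 'v set"
  pq0  :: "'s st"

definition pcomp :: "('s, 'p, 'v) pts \<Rightarrow> ('p \<times> 'p) set \<Rightarrow> ('s, 'p, 'v) pts \<Rightarrow> ('s, 'p, 'v) pts" where
  "pcomp T1 Y T2 =
    (let Q = {Node q1 q2 | q1 q2. q1 \<in> pQ T1 \<and> q2 \<in> pQ T2 \<and>
                (\<forall>(p1, p2) \<in> Y. pval T1 p1 q1 = None \<or> pval T2 p2 q2 = None \<or>
                                 pval T1 p1 q1 = pval T2 p2 q2)}
     in \<lparr> pQ = Q,
          prel = {(Node q1 q2, Node q1' q2') | q1 q2 q1' q2'.
                    Node q1 q2 \<in> Q \<and> Node q1' q2' \<in> Q \<and>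
                    (((q1, q1') \<in> prel T1 \<and> (q2, q2') \<in> prel T2) \<or>
                     ((q1, q1') \<in> prel T1 \<and> q2 = q2') \<or>
                     (q1 = q1' \<and> (q2, q2') \<in> prel T2))},
          pP = pP T1 \<union> pP T2,
          pval = (\<lambda>p s. case s of
                     Node q1 q2 \<Rightarrow> (if p \<in> pP T1 then pval T1 p q1
                                    else if p \<in> pP T2 then pval T2 p q2 else None)
                   | Leaf _ \<Rightarrow> None),
          pC = (\<lambda>p. if p \<in> pP T1 then pC T1 p else pC T2 p),
          pq0 = Node (pq0 T1) (pq0 T2) \<rparr>)"

definition pts_equiv :: "('s, 'p, 'v) pts \<Rightarrow> ('s, 'p, 'v) pts \<Rightarrow> bool" where
  "pts_equiv T1 T2 \<longleftrightarrow>
    (\<exists>f F. bij_betw f (pQ T1) (pQ T2) \<and> bij_betw F (pP T1) (pP T2) \<and>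
       (\<forall>q \<in> pQ T1. \<forall>q' \<in> pQ T1. (q, q') \<in> prel T1 \<longleftrightarrow> (f q, f q') \<in> prel T2) \<and>
       (\<forall>p \<in> pP T1. pC T1 p = pC T2 (F p)) \<and>
       (\<forall>q \<in> pQ T1. \<forall>p \<in> pP T1. pval T1 p q = pval T2 (F p) (f q)) \<and>
       f (pq0 T1) = pq0 T2)"

definition split_atomic :: "('s, 'p, 'v) aets \<Rightarrow> ('s, 'p, 'v) pts" where
  "split_atomic a =
     \<lparr> pQ = Leaf ` (aQ a \<union> aT a),
       prel = map_prod Leaf Leaf ` arel a,
       pP = aP a,
       pval = (\<lambda>p s. case s of Leaf x \<Rightarrow> aval a p x | Node _ _ \<Rightarrow> None),
       pC = aC a,
       pq0 = Leaf (ag0 a) \<rparr>"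

fun split :: "('s, 'p, 'v) ets \<Rightarrow> ('s, 'p, 'v) pts" where
  "split (Atom a) = split_atomic a"
| "split (Par T1 Y T2) = pcomp (split T1) Y (split T2)"

end

theory Submission
  imports Defs
begin

fun leaves :: "'s st \<Rightarrow> 's set" where
  "leaves (Leaf x) = {x}"
| "leaves (Node a b) = leaves a \<union> leaves b"

definition stA :: "('s, 'p, 'v) aets \<Rightarrow> 's set" where
  "stA a = aQ a \<union> aT a"

definition LS :: "('s, 'p, 'v) aets set \<Rightarrow> 'p set set \<Rightarrow> 's set set" where
  "LS A C = {S. S \<subseteq> \<Union>(stA ` A) \<and> (\<forall>a\<in>A. \<exists>!x. x \<in> S \<and> x \<in> stA a) \<and>
     (\<forall>p1 p2. {p1, p2} \<in> C \<longrightarrow> (\<forall>a1\<in>A. \<forall>a2\<in>A. \<forall>x1\<in>S. \<forall>x2\<in>S.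
        p1 \<in> aP a1 \<longrightarrow> p2 \<in> aP a2 \<longrightarrow> x1 \<in> stA a1 \<longrightarrow> x2 \<in> stA a2 \<longrightarrow>
        aval a1 p1 x1 = None \<or> aval a2 p2 x2 = None \<or> aval a1 p1 x1 = aval a2 p2 x2))}"

lemma props_atomic: "props T = \<Union>(aP ` atomic T)"
  by (induction T) auto

lemma stages_atomic: "stages T = \<Union>(stA ` atomic T)"
  by (induction T) (auto simp: stA_def)

lemma pP_split: "pP (split T) = props T"
  by (induction T) (auto simp: split_atomic_def pcomp_def Let_def)

lemma pq0_leaves: "leaves (pq0 (split T)) = ag0 ` atomic T"
  by (induction T) (auto simp: split_atomic_def pcomp_def Let_def)

lemma pQ_Par: "q \<in> pQ (split (Par T1 Y T2)) \<longleftrightarrow> (\<exists>q1 q2. q = Node q1 q2 \<and>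
   q1 \<in> pQ (split T1) \<and> q2 \<in> pQ (split T2) \<and>
   (\<forall>(p1, p2) \<in> Y. pval (split T1) p1 q1 = None \<or> pval (split T2) p2 q2 = None \<or>
                                 pval (split T1) p1 q1 = pval (split T2) p2 q2))"
  by (auto simp: pcomp_def Let_def)

lemma pval_Par: "pval (split (Par T1 Y T2)) p (Node q1 q2) =
   (if p \<in> props T1 then pval (split T1) p q1 else if p \<in> props T2 then pval (split T2) p q2 else None)"
  by (simp add: pcomp_def Let_def pP_split)

lemma pC_Par: "pC (split (Par T1 Y T2)) p = (if p \<in> props T1 then pC (split T1) p else pC (split T2) p)"
  by (simp add: pcomp_def Let_def pP_split)

lemma prel_Par: "(Node q1 q2, Node q1' q2') \<in> prel (split (Par T1 Y T2)) \<longleftrightarrow>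
   Node q1 q2 \<in> pQ (split (Par T1 Y T2)) \<and> Node q1' q2' \<in> pQ (split (Par T1 Y T2)) \<and>
   (((q1, q1') \<in> prel (split T1) \<and> (q2, q2') \<in> prel (split T2)) \<or>
    ((q1, q1') \<in> prel (split T1) \<and> q2 = q2') \<or>
    (q1 = q1' \<and> (q2, q2') \<in> prel (split T2)))"
  by (simp add: pcomp_def Let_def)

declare split.simps(2)[simp del]

lemma leaves_sub: "q \<in> pQ (split T) \<Longrightarrow> leaves q \<subseteq> stages T"
proof (induction T arbitrary: q)
  case (Atom x)
  then show ?case by (auto simp: split_atomic_def)
next
  case (Par T1 Y T2)
  then obtain q1 q2 where "q = Node q1 q2" "q1 \<in> pQ (split T1)" "q2 \<in> pQ (split T2)"
    by (auto simp: pQ_Par)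
  then show ?case using Par.IH by fastforce
qed

lemma crit_props: "wf_ets T \<Longrightarrow> {p1, p2} \<in> criteria T \<Longrightarrow> p1 \<in> props T \<and> p2 \<in> props T"
proof (induction T)
  case (Atom x)
  then show ?case by simp
next
  case (Par T1 Y T2)
  then show ?case by (auto simp: doubleton_eq_iff)
qed

lemma leaves_inj: "wf_ets T \<Longrightarrow> q \<in> pQ (split T) \<Longrightarrow> q' \<in> pQ (split T) \<Longrightarrow> leaves q = leaves q' \<Longrightarrow> q = q'"
proof (induction T arbitrary: q q')
  case (Atom x)
  then show ?case by (auto simp: split_atomic_def)
next
  case (Par T1 Y T2)
  from Par.prems obtain q1 q2 q1' q2' where q: "q = Node q1 q2" "q' = Node q1' q2'"
    and m: "q1 \<in> pQ (split T1)" "q2 \<in> pQ (split T2)" "q1' \<in> pQ (split T1)" "q2' \<in> pQ (split T2)"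
    by (auto simp: pQ_Par)
  have s: "leaves q1 \<subseteq> stages T1" "leaves q2 \<subseteq> stages T2" "leaves q1' \<subseteq> stages T1" "leaves q2' \<subseteq> stages T2"
    using m leaves_sub by blast+
  have d: "stages T1 \<inter> stages T2 = {}" using Par.prems by simp
  have "leaves q1 = leaves q1'" "leaves q2 = leaves q2'"
    using Par.prems(4) q s d by (simp, blast)+
  then show ?case using Par m q by auto
qed

lemma pval_atom: "wf_ets T \<Longrightarrow> q \<in> pQ (split T) \<Longrightarrow> a \<in> atomic T \<Longrightarrow> p \<in> aP a \<Longrightarrow>
   x \<in> leaves q \<Longrightarrow> x \<in> stA a \<Longrightarrow> pval (split T) p q = aval a p x"
proof (induction T arbitrary: q)
  case (Atom x)
  then show ?case by (auto simp: split_atomic_def)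
next
  case (Par T1 Y T2)
  from Par.prems(2) obtain q1 q2 where q: "q = Node q1 q2"
    and m: "q1 \<in> pQ (split T1)" "q2 \<in> pQ (split T2)"
    by (auto simp: pQ_Par)
  have s: "leaves q1 \<subseteq> stages T1" "leaves q2 \<subseteq> stages T2"
    using m leaves_sub by blast+
  have wf: "wf_ets T1" "wf_ets T2" and d: "stages T1 \<inter> stages T2 = {}" "props T1 \<inter> props T2 = {}"
    using Par.prems(1) by auto
  have xq: "x \<in> leaves q1 \<or> x \<in> leaves q2" using Par.prems(5) q by simp
  show ?case
  proof (cases "a \<in> atomic T1")
    case True
    have p1: "p \<in> props T1" using True Par.prems(4) props_atomic[of T1] by blast
    have "stA a \<subseteq> stages T1" using True stages_atomic[of T1] by blast
    hence x1: "x \<in> leaves q1" using xq Par.prems(6) s d by blast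
    have "pval (split T1) p q1 = aval a p x" using Par.IH(1)[OF wf(1) m(1) True Par.prems(4) x1 Par.prems(6)] .
    then show ?thesis using p1 q by (simp add: pval_Par)
  next
    case False
    hence a2: "a \<in> atomic T2" using Par.prems(3) by simp
    have p2: "p \<in> props T2" using a2 Par.prems(4) props_atomic[of T2] by blast
    hence p1: "p \<notin> props T1" using d by blast
    have "stA a \<subseteq> stages T2" using a2 stages_atomic[of T2] by blast
    hence x2: "x \<in> leaves q2" using xq Par.prems(6) s d by blast
    have "pval (split T2) p q2 = aval a p x" using Par.IH(2)[OF wf(2) m(2) a2 Par.prems(4) x2 Par.prems(6)] .
    then show ?thesis using p1 p2 q by (simp add: pval_Par)
  qed
qed

lemma pC_atom: "wf_ets T \<Longrightarrow> a \<in> atomic T \<Longrightarrow> p \<in> aP a \<Longrightarrow> pC (split T) p = aC a p"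
proof (induction T)
  case (Atom x)
  then show ?case by (auto simp: split_atomic_def)
next
  case (Par T1 Y T2)
  have wf: "wf_ets T1" "wf_ets T2" and d: "props T1 \<inter> props T2 = {}" using Par.prems(1) by auto
  show ?case
  proof (cases "a \<in> atomic T1")
    case True
    have "p \<in> props T1" using True Par.prems(3) props_atomic[of T1] by blast
    then show ?thesis using Par.IH(1)[OF wf(1) True Par.prems(3)] by (simp add: pC_Par)
  next
    case False
    hence a2: "a \<in> atomic T2" using Par.prems(2) by simp
    have "p \<in> props T2" using a2 Par.prems(3) props_atomic[of T2] by blast
    hence "p \<notin> props T1" using d by blast
    then show ?thesis using Par.IH(2)[OF wf(2) a2 Par.prems(3)] by (simp add: pC_Par)
  qed
qed

lemma pq0_Par: "pq0 (split (Par T1 Y T2)) = Node (pq0 (split T1)) (pq0 (split T2))"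
  by (simp add: split.simps pcomp_def Let_def)

lemma wf_atoms: "wf_ets T \<Longrightarrow> a \<in> atomic T \<Longrightarrow> wf_atomic a"
  by (induction T) auto

lemma loc1: "wf_ets (Par T1 Y T2) \<Longrightarrow> a \<in> atomic (Par T1 Y T2) \<Longrightarrow> p \<in> aP a \<Longrightarrow> p \<in> props T1 \<Longrightarrow> a \<in> atomic T1"
  using props_atomic[of T2] by auto

lemma loc2: "wf_ets (Par T1 Y T2) \<Longrightarrow> a \<in> atomic (Par T1 Y T2) \<Longrightarrow> p \<in> aP a \<Longrightarrow> p \<in> props T2 \<Longrightarrow> a \<in> atomic T2"
  using props_atomic[of T1] by auto

lemma LS_sub: "S \<in> LS A C \<Longrightarrow> S \<subseteq> \<Union>(stA ` A)"
  unfolding LS_def by blast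

lemma LS_ex: "S \<in> LS A C \<Longrightarrow> a \<in> A \<Longrightarrow> \<exists>x. x \<in> S \<and> x \<in> stA a"
  unfolding LS_def by blast

lemma LS_uniq: "S \<in> LS A C \<Longrightarrow> a \<in> A \<Longrightarrow> x \<in> S \<Longrightarrow> x \<in> stA a \<Longrightarrow> y \<in> S \<Longrightarrow> y \<in> stA a \<Longrightarrow> x = y"
  unfolding LS_def by blast

lemma LS_crit: "S \<in> LS A C \<Longrightarrow> {p1, p2} \<in> C \<Longrightarrow> a1 \<in> A \<Longrightarrow> a2 \<in> A \<Longrightarrow> x1 \<in> S \<Longrightarrow> x2 \<in> S \<Longrightarrow>
  p1 \<in> aP a1 \<Longrightarrow> p2 \<in> aP a2 \<Longrightarrow> x1 \<in> stA a1 \<Longrightarrow> x2 \<in> stA a2 \<Longrightarrow>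
  aval a1 p1 x1 = None \<or> aval a2 p2 x2 = None \<or> aval a1 p1 x1 = aval a2 p2 x2"
  unfolding LS_def by blast

lemma LS_I:
  assumes "S \<subseteq> \<Union>(stA ` A)"
    and "\<And>a. a \<in> A \<Longrightarrow> \<exists>x. x \<in> S \<and> x \<in> stA a"
    and "\<And>a x y. a \<in> A \<Longrightarrow> x \<in> S \<Longrightarrow> x \<in> stA a \<Longrightarrow> y \<in> S \<Longrightarrow> y \<in> stA a \<Longrightarrow> x = y"
    and "\<And>p1 p2 a1 a2 x1 x2. {p1, p2} \<in> C \<Longrightarrow> a1 \<in> A \<Longrightarrow> a2 \<in> A \<Longrightarrow> x1 \<in> S \<Longrightarrow> x2 \<in> S \<Longrightarrow>
       p1 \<in> aP a1 \<Longrightarrow> p2 \<in> aP a2 \<Longrightarrow> x1 \<in> stA a1 \<Longrightarrow> x2 \<in> stA a2 \<Longrightarrow>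
       aval a1 p1 x1 = None \<or> aval a2 p2 x2 = None \<or> aval a1 p1 x1 = aval a2 p2 x2"
  shows "S \<in> LS A C"
proof -
  have "\<forall>a\<in>A. \<exists>!x. x \<in> S \<and> x \<in> stA a"
  proof
    fix a assume a: "a \<in> A"
    obtain x where "x \<in> S \<and> x \<in> stA a" using assms(2)[OF a] by blast
    then show "\<exists>!x. x \<in> S \<and> x \<in> stA a" using assms(3)[OF a] by blast
  qed
  moreover have "\<forall>p1 p2. {p1, p2} \<in> C \<longrightarrow> (\<forall>a1\<in>A. \<forall>a2\<in>A. \<forall>x1\<in>S. \<forall>x2\<in>S.
        p1 \<in> aP a1 \<longrightarrow> p2 \<in> aP a2 \<longrightarrow> x1 \<in> stA a1 \<longrightarrow> x2 \<in> stA a2 \<longrightarrow>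
        aval a1 p1 x1 = None \<or> aval a2 p2 x2 = None \<or> aval a1 p1 x1 = aval a2 p2 x2)"
    using assms(4) by blast
  ultimately show ?thesis using assms(1) unfolding LS_def by blast
qed

lemma LS_of: "wf_ets T \<Longrightarrow> q \<in> pQ (split T) \<Longrightarrow> leaves q \<in> LS (atomic T) (criteria T)"
proof (induction T arbitrary: q)
  case (Atom a)
  then show ?case by (auto simp: split_atomic_def LS_def stA_def)
next
  case (Par T1 Y T2)
  from Par.prems(2) obtain q1 q2 where q: "q = Node q1 q2"
    and m: "q1 \<in> pQ (split T1)" "q2 \<in> pQ (split T2)"
    and Yc: "\<forall>(p1, p2) \<in> Y. pval (split T1) p1 q1 = None \<or> pval (split T2) p2 q2 = None \<or>
                                 pval (split T1) p1 q1 = pval (split T2) p2 q2"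
    unfolding pQ_Par by blast
  have wf: "wf_ets T1" "wf_ets T2" and d: "stages T1 \<inter> stages T2 = {}" "props T1 \<inter> props T2 = {}"
    and Ysub: "Y \<subseteq> props T1 \<times> props T2"
    using Par.prems(1) by auto
  have s: "leaves q1 \<subseteq> stages T1" "leaves q2 \<subseteq> stages T2"
    using m leaves_sub by blast+
  have L1: "leaves q1 \<in> LS (atomic T1) (criteria T1)" using Par.IH(1)[OF wf(1) m(1)] .
  have L2: "leaves q2 \<in> LS (atomic T2) (criteria T2)" using Par.IH(2)[OF wf(2) m(2)] .
  have lq: "leaves q = leaves q1 \<union> leaves q2" using q by simp
  have in1: "x \<in> leaves q1" if "x \<in> leaves q" "x \<in> stA a" "a \<in> atomic T1" for x a
  proof -
    have "stA a \<subseteq> stages T1" using that(3) stages_atomic[of T1] by blast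
    then show ?thesis using that(1,2) lq s d by blast
  qed
  have in2: "x \<in> leaves q2" if "x \<in> leaves q" "x \<in> stA a" "a \<in> atomic T2" for x a
  proof -
    have "stA a \<subseteq> stages T2" using that(3) stages_atomic[of T2] by blast
    then show ?thesis using that(1,2) lq s d by blast
  qed
  have lp1: "a \<in> atomic T1" if "a \<in> atomic (Par T1 Y T2)" "p \<in> aP a" "p \<in> props T1" for a p
    using loc1[OF Par.prems(1) that] .
  have lp2: "a \<in> atomic T2" if "a \<in> atomic (Par T1 Y T2)" "p \<in> aP a" "p \<in> props T2" for a p
    using loc2[OF Par.prems(1) that] .
  show ?case
  proof (rule LS_I)
    show "leaves q \<subseteq> \<Union>(stA ` atomic (Par T1 Y T2))"
      using LS_sub[OF L1] LS_sub[OF L2] lq by auto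
  next
    fix a assume a: "a \<in> atomic (Par T1 Y T2)"
    show "\<exists>x. x \<in> leaves q \<and> x \<in> stA a"
    proof (cases "a \<in> atomic T1")
      case True then show ?thesis using LS_ex[OF L1 True] lq by blast
    next
      case False
      hence "a \<in> atomic T2" using a by simp
      then show ?thesis using LS_ex[OF L2] lq by blast
    qed
  next
    fix a x y assume a: "a \<in> atomic (Par T1 Y T2)" and xy: "x \<in> leaves q" "x \<in> stA a" "y \<in> leaves q" "y \<in> stA a"
    show "x = y"
    proof (cases "a \<in> atomic T1")
      case True show ?thesis using LS_uniq[OF L1 True in1[OF xy(1,2) True] xy(2) in1[OF xy(3,4) True] xy(4)] .
    next
      case False
      hence a2: "a \<in> atomic T2" using a by simp
      show ?thesis using LS_uniq[OF L2 a2 in2[OF xy(1,2) a2] xy(2) in2[OF xy(3,4) a2] xy(4)] .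
    qed
  next
    fix p1 p2 a1 a2 x1 x2
    assume c: "{p1, p2} \<in> criteria (Par T1 Y T2)" and a: "a1 \<in> atomic (Par T1 Y T2)" "a2 \<in> atomic (Par T1 Y T2)"
      and x: "x1 \<in> leaves q" "x2 \<in> leaves q" and p: "p1 \<in> aP a1" "p2 \<in> aP a2"
      and xs: "x1 \<in> stA a1" "x2 \<in> stA a2"
    have cY: "aval b1 r1 z1 = None \<or> aval b2 r2 z2 = None \<or> aval b1 r1 z1 = aval b2 r2 z2"
      if y: "(r1, r2) \<in> Y"
      and a: "b1 \<in> atomic (Par T1 Y T2)" "b2 \<in> atomic (Par T1 Y T2)"
      and x: "z1 \<in> leaves q" "z2 \<in> leaves q" and p: "r1 \<in> aP b1" "r2 \<in> aP b2"
      and xs: "z1 \<in> stA b1" "z2 \<in> stA b2" for r1 r2 b1 b2 z1 z2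
    proof -
      have r: "r1 \<in> props T1" "r2 \<in> props T2" using y Ysub by auto
      have b1: "b1 \<in> atomic T1" using lp1[OF a(1) p(1) r(1)] .
      have b2: "b2 \<in> atomic T2" using lp2[OF a(2) p(2) r(2)] .
      have "pval (split T1) r1 q1 = aval b1 r1 z1"
        using pval_atom[OF wf(1) m(1) b1 p(1) in1[OF x(1) xs(1) b1] xs(1)] .
      moreover have "pval (split T2) r2 q2 = aval b2 r2 z2"
        using pval_atom[OF wf(2) m(2) b2 p(2) in2[OF x(2) xs(2) b2] xs(2)] .
      moreover have "pval (split T1) r1 q1 = None \<or> pval (split T2) r2 q2 = None \<or>
                                 pval (split T1) r1 q1 = pval (split T2) r2 q2"
        using Yc y by blast
      ultimately show ?thesis by simp
    qed
    have "{p1, p2} \<in> criteria T1 \<or> {p1, p2} \<in> criteria T2 \<or> (\<exists>y1 y2. (y1, y2) \<in> Y \<and> {p1, p2} = {y1, y2})"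
      using c by auto
    then consider "{p1, p2} \<in> criteria T1" | "{p1, p2} \<in> criteria T2"
      | y1 y2 where "(y1, y2) \<in> Y" "{p1, p2} = {y1, y2}" by blast
    then show "aval a1 p1 x1 = None \<or> aval a2 p2 x2 = None \<or> aval a1 p1 x1 = aval a2 p2 x2"
    proof cases
      case 1
      have pp: "p1 \<in> props T1" "p2 \<in> props T1" using crit_props[OF wf(1) 1] by blast+
      have a1: "a1 \<in> atomic T1" using lp1[OF a(1) p(1) pp(1)] .
      have a2: "a2 \<in> atomic T1" using lp1[OF a(2) p(2) pp(2)] .
      show ?thesis using LS_crit[OF L1 1 a1 a2 in1[OF x(1) xs(1) a1] in1[OF x(2) xs(2) a2] p xs] .
    next
      case 2
      have pp: "p1 \<in> props T2" "p2 \<in> props T2" using crit_props[OF wf(2) 2] by blast+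
      have a1: "a1 \<in> atomic T2" using lp2[OF a(1) p(1) pp(1)] .
      have a2: "a2 \<in> atomic T2" using lp2[OF a(2) p(2) pp(2)] .
      show ?thesis using LS_crit[OF L2 2 a1 a2 in2[OF x(1) xs(1) a1] in2[OF x(2) xs(2) a2] p xs] .
    next
      case 3
      then have "(p1 = y1 \<and> p2 = y2) \<or> (p1 = y2 \<and> p2 = y1)" by (simp add: doubleton_eq_iff)
      then show ?thesis
      proof
        assume "p1 = y1 \<and> p2 = y2"
        then have "(p1, p2) \<in> Y" using 3 by simp
        then show ?thesis using cY[OF _ a x p xs] by blast
      next
        assume "p1 = y2 \<and> p2 = y1"
        then have "(p2, p1) \<in> Y" using 3 by simp
        then have "aval a2 p2 x2 = None \<or> aval a1 p1 x1 = None \<or> aval a2 p2 x2 = aval a1 p1 x1"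
          using cY[of p2 p1 a2 a1 x2 x1] a x p xs by blast
        then show ?thesis by auto
      qed
    qed
  qed
qed

lemma LS_to: "wf_ets T \<Longrightarrow> S \<in> LS (atomic T) (criteria T) \<Longrightarrow>
   \<exists>q \<in> pQ (split T). leaves q = S \<and> (S = leaves (pq0 (split T)) \<longrightarrow> q = pq0 (split T))"
proof (induction T arbitrary: S)
  case (Atom a)
  have aa: "a \<in> atomic (Atom a)" by simp
  obtain x where x: "x \<in> S" "x \<in> stA a" using LS_ex[OF Atom.prems(2) aa] by blast
  have "S \<subseteq> stA a" using LS_sub[OF Atom.prems(2)] by simp
  hence S: "S = {x}" using LS_uniq[OF Atom.prems(2) aa _ _ x] x(1) by blast
  show ?case
    by (rule bexI[of _ "Leaf x"]) (use S x in \<open>auto simp: split_atomic_def stA_def\<close>)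
next
  case (Par T1 Y T2)
  have wf: "wf_ets T1" "wf_ets T2" and d: "stages T1 \<inter> stages T2 = {}" "props T1 \<inter> props T2 = {}"
    and Ysub: "Y \<subseteq> props T1 \<times> props T2"
    using Par.prems(1) by auto
  note LSP = Par.prems(2)
  define S1 where "S1 = S \<inter> stages T1"
  define S2 where "S2 = S \<inter> stages T2"
  have st1: "stA a \<subseteq> stages T1" if "a \<in> atomic T1" for a using that stages_atomic[of T1] by blast
  have st2: "stA a \<subseteq> stages T2" if "a \<in> atomic T2" for a using that stages_atomic[of T2] by blast
  have SU: "S = S1 \<union> S2" using LS_sub[OF LSP] stages_atomic[of T1] stages_atomic[of T2]
    unfolding S1_def S2_def by auto
  have S1: "S1 \<in> LS (atomic T1) (criteria T1)"
  proof (rule LS_I)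
    show "S1 \<subseteq> \<Union>(stA ` atomic T1)" using stages_atomic[of T1] S1_def by auto
  next
    fix a assume a: "a \<in> atomic T1"
    then show "\<exists>x. x \<in> S1 \<and> x \<in> stA a" using LS_ex[OF LSP, of a] st1[OF a] S1_def by auto
  next
    fix a x y assume "a \<in> atomic T1" "x \<in> S1" "x \<in> stA a" "y \<in> S1" "y \<in> stA a"
    then show "x = y" using LS_uniq[OF LSP, of a x y] S1_def by auto
  next
    fix p1 p2 a1 a2 x1 x2 assume "{p1, p2} \<in> criteria T1" "a1 \<in> atomic T1" "a2 \<in> atomic T1"
      "x1 \<in> S1" "x2 \<in> S1" "p1 \<in> aP a1" "p2 \<in> aP a2" "x1 \<in> stA a1" "x2 \<in> stA a2"
    then show "aval a1 p1 x1 = None \<or> aval a2 p2 x2 = None \<or> aval a1 p1 x1 = aval a2 p2 x2"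
      using LS_crit[OF LSP, of p1 p2 a1 a2 x1 x2] S1_def by auto
  qed
  have S2: "S2 \<in> LS (atomic T2) (criteria T2)"
  proof (rule LS_I)
    show "S2 \<subseteq> \<Union>(stA ` atomic T2)" using stages_atomic[of T2] S2_def by auto
  next
    fix a assume a: "a \<in> atomic T2"
    then show "\<exists>x. x \<in> S2 \<and> x \<in> stA a" using LS_ex[OF LSP, of a] st2[OF a] S2_def by auto
  next
    fix a x y assume "a \<in> atomic T2" "x \<in> S2" "x \<in> stA a" "y \<in> S2" "y \<in> stA a"
    then show "x = y" using LS_uniq[OF LSP, of a x y] S2_def by auto
  next
    fix p1 p2 a1 a2 x1 x2 assume "{p1, p2} \<in> criteria T2" "a1 \<in> atomic T2" "a2 \<in> atomic T2"
      "x1 \<in> S2" "x2 \<in> S2" "p1 \<in> aP a1" "p2 \<in> aP a2" "x1 \<in> stA a1" "x2 \<in> stA a2"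
    then show "aval a1 p1 x1 = None \<or> aval a2 p2 x2 = None \<or> aval a1 p1 x1 = aval a2 p2 x2"
      using LS_crit[OF LSP, of p1 p2 a1 a2 x1 x2] S2_def by auto
  qed
  obtain q1 where q1: "q1 \<in> pQ (split T1)" "leaves q1 = S1"
    "S1 = leaves (pq0 (split T1)) \<longrightarrow> q1 = pq0 (split T1)"
    using Par.IH(1)[OF wf(1) S1] by blast
  obtain q2 where q2: "q2 \<in> pQ (split T2)" "leaves q2 = S2"
    "S2 = leaves (pq0 (split T2)) \<longrightarrow> q2 = pq0 (split T2)"
    using Par.IH(2)[OF wf(2) S2] by blast
  have Yc0: "\<forall>p1 p2. (p1, p2) \<in> Y \<longrightarrow> pval (split T1) p1 q1 = None \<or> pval (split T2) p2 q2 = None \<or>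
                                 pval (split T1) p1 q1 = pval (split T2) p2 q2"
  proof (intro allI impI)
    fix p1 p2 assume y: "(p1, p2) \<in> Y"
    have "p1 \<in> props T1" "p2 \<in> props T2" using y Ysub by auto
    then obtain a1 a2 where a: "a1 \<in> atomic T1" "p1 \<in> aP a1" "a2 \<in> atomic T2" "p2 \<in> aP a2"
      using props_atomic[of T1] props_atomic[of T2] by blast
    obtain x1 where x1: "x1 \<in> S1" "x1 \<in> stA a1" using LS_ex[OF S1 a(1)] by blast
    obtain x2 where x2: "x2 \<in> S2" "x2 \<in> stA a2" using LS_ex[OF S2 a(3)] by blast
    have e1: "pval (split T1) p1 q1 = aval a1 p1 x1"
      using pval_atom[OF wf(1) q1(1) a(1,2) _ x1(2)] x1(1) q1(2) by blast
    have e2: "pval (split T2) p2 q2 = aval a2 p2 x2"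
      using pval_atom[OF wf(2) q2(1) a(3,4) _ x2(2)] x2(1) q2(2) by blast
    have c: "{p1, p2} \<in> criteria (Par T1 Y T2)" using y by auto
    have aa: "a1 \<in> atomic (Par T1 Y T2)" "a2 \<in> atomic (Par T1 Y T2)" using a by auto
    have xx: "x1 \<in> S" "x2 \<in> S" using x1 x2 SU by auto
    have "aval a1 p1 x1 = None \<or> aval a2 p2 x2 = None \<or> aval a1 p1 x1 = aval a2 p2 x2"
      using LS_crit[OF LSP c aa xx a(2) a(4) x1(2) x2(2)] .
    then show "pval (split T1) p1 q1 = None \<or> pval (split T2) p2 q2 = None \<or>
                                 pval (split T1) p1 q1 = pval (split T2) p2 q2"
      using e1 e2 by simp
  qed
  have Yc: "\<forall>(p1, p2) \<in> Y. pval (split T1) p1 q1 = None \<or> pval (split T2) p2 q2 = None \<or>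
                                 pval (split T1) p1 q1 = pval (split T2) p2 q2"
    using Yc0 by blast
  have qin: "Node q1 q2 \<in> pQ (split (Par T1 Y T2))" using q1(1) q2(1) Yc unfolding pQ_Par by blast
  have "leaves (Node q1 q2) = S" using q1(2) q2(2) SU by simp
  moreover have "Node q1 q2 = pq0 (split (Par T1 Y T2))" if "S = leaves (pq0 (split (Par T1 Y T2)))"
  proof -
    have l1: "leaves (pq0 (split T1)) \<subseteq> stages T1"
      using pq0_leaves[of T1] wf_atoms[OF wf(1)] stages_atomic[of T1]
      by (auto simp: wf_atomic_def stA_def)
    have l2: "leaves (pq0 (split T2)) \<subseteq> stages T2"
      using pq0_leaves[of T2] wf_atoms[OF wf(2)] stages_atomic[of T2]
      by (auto simp: wf_atomic_def stA_def)
    have "S = leaves (pq0 (split T1)) \<union> leaves (pq0 (split T2))" using that by (simp add: pq0_Par)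
    then have "S1 = leaves (pq0 (split T1))" "S2 = leaves (pq0 (split T2))"
      using l1 l2 d unfolding S1_def S2_def by auto
    then show ?thesis using q1(3) q2(3) by (simp add: pq0_Par)
  qed
  ultimately show ?case using qin by blast
qed

definition UU :: "('s, 'p, 'v) aets set \<Rightarrow> 's set \<Rightarrow> 's set \<Rightarrow> bool" where
  "UU A S S' \<longleftrightarrow> (\<forall>a\<in>A. \<forall>x\<in>S. \<forall>x'\<in>S'. x \<in> stA a \<longrightarrow> x' \<in> stA a \<longrightarrow> (x, x') \<in> arel a \<or> x = x')"

definition EE :: "('s, 'p, 'v) aets set \<Rightarrow> 's set \<Rightarrow> 's set \<Rightarrow> bool" where
  "EE A S S' \<longleftrightarrow> (\<exists>a\<in>A. \<exists>x\<in>S. \<exists>x'\<in>S'. x \<in> stA a \<and> x' \<in> stA a \<and> (x, x') \<in> arel a)"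

lemma UU_refl: "S \<in> LS A C \<Longrightarrow> UU A S S"
  unfolding UU_def using LS_uniq by metis

lemma UE_sub: "S \<in> LS A C \<Longrightarrow> S' \<in> LS A C' \<Longrightarrow> UU A S S' \<Longrightarrow> \<not> EE A S S' \<Longrightarrow> S \<subseteq> S'"
proof
  fix y assume L: "S \<in> LS A C" "S' \<in> LS A C'" and U: "UU A S S'" and E: "\<not> EE A S S'" and y: "y \<in> S"
  obtain a where a: "a \<in> A" "y \<in> stA a" using LS_sub[OF L(1)] y by blast
  obtain x' where x': "x' \<in> S'" "x' \<in> stA a" using LS_ex[OF L(2) a(1)] by blast
  have "(y, x') \<in> arel a \<or> y = x'" using U a y x' unfolding UU_def by blast
  moreover have "(y, x') \<notin> arel a" using E a y x' unfolding EE_def by blast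
  ultimately show "y \<in> S'" using x' by simp
qed

lemma UE_sub2: "S \<in> LS A C \<Longrightarrow> S' \<in> LS A C' \<Longrightarrow> UU A S S' \<Longrightarrow> \<not> EE A S S' \<Longrightarrow> S' \<subseteq> S"
proof
  fix y assume L: "S \<in> LS A C" "S' \<in> LS A C'" and U: "UU A S S'" and E: "\<not> EE A S S'" and y: "y \<in> S'"
  obtain a where a: "a \<in> A" "y \<in> stA a" using LS_sub[OF L(2)] y by blast
  obtain x where x: "x \<in> S" "x \<in> stA a" using LS_ex[OF L(1) a(1)] by blast
  have "(x, y) \<in> arel a \<or> x = y" using U a y x unfolding UU_def by blast
  moreover have "(x, y) \<notin> arel a" using E a y x unfolding EE_def by blast
  ultimately show "y \<in> S" using x by simp
qed

lemma UE_eq: "S \<in> LS A C \<Longrightarrow> S' \<in> LS A C' \<Longrightarrow> UU A S S' \<Longrightarrow> \<not> EE A S S' \<Longrightarrow> S = S'"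
  using UE_sub UE_sub2 by (metis subset_antisym)

lemma loc_in:
  assumes "x \<in> S1 \<union> S2" "x \<in> X1" "S2 \<subseteq> X2" "X1 \<inter> X2 = {}"
  shows "x \<in> S1"
  using assms by blast

lemma UU_split:
  assumes S1: "S1 \<subseteq> X1" "S1' \<subseteq> X1" and S2: "S2 \<subseteq> X2" "S2' \<subseteq> X2" and d: "X1 \<inter> X2 = {}"
    and A1: "\<And>a. a \<in> A1 \<Longrightarrow> stA a \<subseteq> X1" and A2: "\<And>a. a \<in> A2 \<Longrightarrow> stA a \<subseteq> X2"
  shows "UU (A1 \<union> A2) (S1 \<union> S2) (S1' \<union> S2') \<longleftrightarrow> UU A1 S1 S1' \<and> UU A2 S2 S2'"
proof
  assume U: "UU (A1 \<union> A2) (S1 \<union> S2) (S1' \<union> S2')"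
  show "UU A1 S1 S1' \<and> UU A2 S2 S2'" using U unfolding UU_def by blast
next
  assume U: "UU A1 S1 S1' \<and> UU A2 S2 S2'"
  show "UU (A1 \<union> A2) (S1 \<union> S2) (S1' \<union> S2')" unfolding UU_def
  proof (intro ballI impI)
    fix a x x' assume a: "a \<in> A1 \<union> A2" and x: "x \<in> S1 \<union> S2" "x' \<in> S1' \<union> S2'" and xs: "x \<in> stA a" "x' \<in> stA a"
    show "(x, x') \<in> arel a \<or> x = x'"
    proof (cases "a \<in> A1")
      case True
      have "x \<in> S1" using loc_in[OF x(1) _ S2(1) d] A1[OF True] xs(1) by blast
      moreover have "x' \<in> S1'" using loc_in[OF x(2) _ S2(2) d] A1[OF True] xs(2) by blast
      ultimately show ?thesis using U True xs unfolding UU_def by blast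
    next
      case False
      hence a2: "a \<in> A2" using a by blast
      have d': "X2 \<inter> X1 = {}" using d by blast
      have "x \<in> S2" using loc_in[of x S2 S1, OF _ _ S1(1) d'] x(1) A2[OF a2] xs(1) by blast
      moreover have "x' \<in> S2'" using loc_in[of x' S2' S1', OF _ _ S1(2) d'] x(2) A2[OF a2] xs(2) by blast
      ultimately show ?thesis using U a2 xs unfolding UU_def by blast
    qed
  qed
qed

lemma EE_split:
  assumes S1: "S1 \<subseteq> X1" "S1' \<subseteq> X1" and S2: "S2 \<subseteq> X2" "S2' \<subseteq> X2" and d: "X1 \<inter> X2 = {}"
    and A1: "\<And>a. a \<in> A1 \<Longrightarrow> stA a \<subseteq> X1" and A2: "\<And>a. a \<in> A2 \<Longrightarrow> stA a \<subseteq> X2"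
  shows "EE (A1 \<union> A2) (S1 \<union> S2) (S1' \<union> S2') \<longleftrightarrow> EE A1 S1 S1' \<or> EE A2 S2 S2'"
proof
  assume "EE (A1 \<union> A2) (S1 \<union> S2) (S1' \<union> S2')"
  then obtain a x x' where a: "a \<in> A1 \<union> A2" and x: "x \<in> S1 \<union> S2" "x' \<in> S1' \<union> S2'"
    and xs: "x \<in> stA a" "x' \<in> stA a" and r: "(x, x') \<in> arel a"
    unfolding EE_def by blast
  show "EE A1 S1 S1' \<or> EE A2 S2 S2'"
  proof (cases "a \<in> A1")
    case True
    have "x \<in> S1" using loc_in[OF x(1) _ S2(1) d] A1[OF True] xs(1) by blast
    moreover have "x' \<in> S1'" using loc_in[OF x(2) _ S2(2) d] A1[OF True] xs(2) by blast
    ultimately show ?thesis using True xs r unfolding EE_def by blast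
  next
    case False
    hence a2: "a \<in> A2" using a by blast
    have d': "X2 \<inter> X1 = {}" using d by blast
    have "x \<in> S2" using loc_in[of x S2 S1, OF _ _ S1(1) d'] x(1) A2[OF a2] xs(1) by blast
    moreover have "x' \<in> S2'" using loc_in[of x' S2' S1', OF _ _ S1(2) d'] x(2) A2[OF a2] xs(2) by blast
    ultimately show ?thesis using a2 xs r unfolding EE_def by blast
  qed
next
  assume "EE A1 S1 S1' \<or> EE A2 S2 S2'"
  then show "EE (A1 \<union> A2) (S1 \<union> S2) (S1' \<union> S2')" unfolding EE_def by blast
qed

lemma prel_R: "wf_ets T \<Longrightarrow> q \<in> pQ (split T) \<Longrightarrow> q' \<in> pQ (split T) \<Longrightarrow>
  (q, q') \<in> prel (split T) \<longleftrightarrow> UU (atomic T) (leaves q) (leaves q') \<and> EE (atomic T) (leaves q) (leaves q')"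
proof (induction T arbitrary: q q')
  case (Atom a)
  then show ?case by (auto simp: split_atomic_def UU_def EE_def stA_def)
next
  case (Par T1 Y T2)
  from Par.prems obtain q1 q2 q1' q2' where q: "q = Node q1 q2" "q' = Node q1' q2'"
    and m: "q1 \<in> pQ (split T1)" "q2 \<in> pQ (split T2)" "q1' \<in> pQ (split T1)" "q2' \<in> pQ (split T2)"
    by (auto simp: pQ_Par)
  have wf: "wf_ets T1" "wf_ets T2" using Par.prems by auto
  have s: "leaves q1 \<subseteq> stages T1" "leaves q2 \<subseteq> stages T2" "leaves q1' \<subseteq> stages T1" "leaves q2' \<subseteq> stages T2"
    using m leaves_sub by blast+
  have d: "stages T1 \<inter> stages T2 = {}" using Par.prems by simp
  have st1: "stA a \<subseteq> stages T1" if "a \<in> atomic T1" for a using that stages_atomic[of T1] by auto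
  have st2: "stA a \<subseteq> stages T2" if "a \<in> atomic T2" for a using that stages_atomic[of T2] by auto
  have U: "UU (atomic (Par T1 Y T2)) (leaves q) (leaves q') \<longleftrightarrow>
     UU (atomic T1) (leaves q1) (leaves q1') \<and> UU (atomic T2) (leaves q2) (leaves q2')"
    unfolding q leaves.simps atomic.simps by (rule UU_split[OF s(1,3) s(2,4) d st1 st2])
  have E: "EE (atomic (Par T1 Y T2)) (leaves q) (leaves q') \<longleftrightarrow>
     EE (atomic T1) (leaves q1) (leaves q1') \<or> EE (atomic T2) (leaves q2) (leaves q2')"
    unfolding q leaves.simps atomic.simps by (rule EE_split[OF s(1,3) s(2,4) d st1 st2])
  have L: "leaves q1 \<in> LS (atomic T1) (criteria T1)" "leaves q1' \<in> LS (atomic T1) (criteria T1)"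
     "leaves q2 \<in> LS (atomic T2) (criteria T2)" "leaves q2' \<in> LS (atomic T2) (criteria T2)"
    using LS_of wf m by blast+
  have eq1: "q1 = q1'" if "UU (atomic T1) (leaves q1) (leaves q1')" "\<not> EE (atomic T1) (leaves q1) (leaves q1')"
    using UE_eq[OF L(1,2) that] leaves_inj wf m by blast
  have eq2: "q2 = q2'" if "UU (atomic T2) (leaves q2) (leaves q2')" "\<not> EE (atomic T2) (leaves q2) (leaves q2')"
    using UE_eq[OF L(3,4) that] leaves_inj wf m by blast
  have r1: "UU (atomic T1) (leaves q1) (leaves q1)" using UU_refl L by blast
  have r2: "UU (atomic T2) (leaves q2) (leaves q2)" using UU_refl L by blast
  have IH1: "(q1, q1') \<in> prel (split T1) \<longleftrightarrow> UU (atomic T1) (leaves q1) (leaves q1') \<and> EE (atomic T1) (leaves q1) (leaves q1')"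
    using Par.IH(1) wf m by blast
  have IH2: "(q2, q2') \<in> prel (split T2) \<longleftrightarrow> UU (atomic T2) (leaves q2) (leaves q2') \<and> EE (atomic T2) (leaves q2) (leaves q2')"
    using Par.IH(2) wf m by blast
  have P: "(q, q') \<in> prel (split (Par T1 Y T2)) \<longleftrightarrow>
    (((q1, q1') \<in> prel (split T1) \<and> (q2, q2') \<in> prel (split T2)) \<or>
    ((q1, q1') \<in> prel (split T1) \<and> q2 = q2') \<or>
    (q1 = q1' \<and> (q2, q2') \<in> prel (split T2)))"
    using prel_Par[of q1 q2 q1' q2' T1 Y T2] Par.prems(2,3) q by simp
  define U1 where "U1 = UU (atomic T1) (leaves q1) (leaves q1')"
  define U2 where "U2 = UU (atomic T2) (leaves q2) (leaves q2')"
  define E1 where "E1 = EE (atomic T1) (leaves q1) (leaves q1')"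
  define E2 where "E2 = EE (atomic T2) (leaves q2) (leaves q2')"
  have e1: "q1 = q1' \<Longrightarrow> U1" using r1 unfolding U1_def by simp
  have e2: "q2 = q2' \<Longrightarrow> U2" using r2 unfolding U2_def by simp
  have f1: "U1 \<Longrightarrow> \<not> E1 \<Longrightarrow> q1 = q1'" using eq1 unfolding U1_def E1_def by blast
  have f2: "U2 \<Longrightarrow> \<not> E2 \<Longrightarrow> q2 = q2'" using eq2 unfolding U2_def E2_def by blast
  have I1: "(q1, q1') \<in> prel (split T1) \<longleftrightarrow> U1 \<and> E1" using IH1 unfolding U1_def E1_def .
  have I2: "(q2, q2') \<in> prel (split T2) \<longleftrightarrow> U2 \<and> E2" using IH2 unfolding U2_def E2_def .
  have "(q, q') \<in> prel (split (Par T1 Y T2)) \<longleftrightarrow> U1 \<and> U2 \<and> (E1 \<or> E2)"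
    unfolding P I1 I2 using e1 e2 f1 f2 by blast
  then show ?case unfolding U E U1_def U2_def E1_def E2_def by simp
qed


lemma leaves_bij: "wf_ets T \<Longrightarrow> bij_betw leaves (pQ (split T)) (LS (atomic T) (criteria T))"
  unfolding bij_betw_def
proof
  assume wf: "wf_ets T"
  show "inj_on leaves (pQ (split T))" using leaves_inj[OF wf] by (meson inj_onI)
  show "leaves ` pQ (split T) = LS (atomic T) (criteria T)"
    using LS_of[OF wf] LS_to[OF wf] by fastforce
qed

theorem proposition1:
  fixes T1 T2 :: "('s, 'p, 'v) ets"
  assumes "wf_ets T1" and "wf_ets T2" and "ets_equiv T1 T2"
  shows "pts_equiv (split T1) (split T2)"
proof -
  have A: "atomic T1 = atomic T2" and C: "criteria T1 = criteria T2"
    using assms(3) unfolding ets_equiv_def by auto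
  let ?L = "LS (atomic T1) (criteria T1)"
  have b1: "bij_betw leaves (pQ (split T1)) ?L" using leaves_bij[OF assms(1)] .
  have b2: "bij_betw leaves (pQ (split T2)) ?L" using leaves_bij[OF assms(2)] A C by simp
  have inj2: "inj_on leaves (pQ (split T2))" using b2 bij_betw_def by blast
  define f where "f q = (if q \<in> pQ (split T1) then the_inv_into (pQ (split T2)) leaves (leaves q) else pq0 (split T2))" for q
  have fb: "bij_betw f (pQ (split T1)) (pQ (split T2))"
  proof -
    have "bij_betw (the_inv_into (pQ (split T2)) leaves \<circ> leaves) (pQ (split T1)) (pQ (split T2))"
      using bij_betw_trans[OF b1 bij_betw_the_inv_into[OF b2]] .
    then show ?thesis by (rule bij_betw_cong[THEN iffD1, rotated]) (simp add: f_def)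
  qed
  have fl: "f q \<in> pQ (split T2) \<and> leaves (f q) = leaves q" if "q \<in> pQ (split T1)" for q
  proof -
    have "leaves q \<in> ?L" using b1 that unfolding bij_betw_def by blast
    then have "leaves q \<in> leaves ` pQ (split T2)" using b2 unfolding bij_betw_def by blast
    then show ?thesis using that inj2 by (simp add: f_def the_inv_into_into f_the_inv_into_f)
  qed
  have rel: "\<forall>q \<in> pQ (split T1). \<forall>q' \<in> pQ (split T1). (q, q') \<in> prel (split T1) \<longleftrightarrow> (f q, f q') \<in> prel (split T2)"
    using prel_R[OF assms(1)] prel_R[OF assms(2)] fl A by simp
  have PP: "pP (split T1) = pP (split T2)" using A by (simp add: pP_split props_atomic)
  have pc: "\<forall>p \<in> pP (split T1). pC (split T1) p = pC (split T2) (id p)"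
  proof
    fix p assume "p \<in> pP (split T1)"
    then obtain a where a: "a \<in> atomic T1" "p \<in> aP a" by (auto simp: pP_split props_atomic)
    then show "pC (split T1) p = pC (split T2) (id p)"
      using pC_atom[OF assms(1) a] pC_atom[OF assms(2), of a p] A by simp
  qed
  have pv: "\<forall>q \<in> pQ (split T1). \<forall>p \<in> pP (split T1). pval (split T1) p q = pval (split T2) (id p) (f q)"
  proof (intro ballI)
    fix q p assume q: "q \<in> pQ (split T1)" and "p \<in> pP (split T1)"
    then obtain a where a: "a \<in> atomic T1" "p \<in> aP a" by (auto simp: pP_split props_atomic)
    obtain x where x: "x \<in> leaves q" "x \<in> stA a" using LS_of[OF assms(1) q] a unfolding LS_def by blast
    show "pval (split T1) p q = pval (split T2) (id p) (f q)"
      using pval_atom[OF assms(1) q a x] pval_atom[OF assms(2), of "f q" a p x] fl[OF q] x a A by simp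
  qed
  have p0: "f (pq0 (split T1)) = pq0 (split T2)"
  proof (cases "pq0 (split T1) \<in> pQ (split T1)")
    case True
    have le: "leaves (pq0 (split T1)) = leaves (pq0 (split T2))" using A by (simp add: pq0_leaves)
    have "leaves (pq0 (split T2)) \<in> LS (atomic T2) (criteria T2)"
      using LS_of[OF assms(1) True] le A C by simp
    then have "pq0 (split T2) \<in> pQ (split T2)" using LS_to[OF assms(2)] by blast
    then show ?thesis using True le inj2 by (simp add: f_def the_inv_into_f_f)
  next
    case False
    then show ?thesis by (simp add: f_def)
  qed
  show ?thesis unfolding pts_equiv_def
    using fb rel pc pv p0 PP bij_betw_id[of "pP (split T1)"] by metis
qed

end
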